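(* Let $[N]=\{1,\dots,N\}$ be a set of arms, $H\ge 1$ a horizon, and let $\tau$ be a trajectory specifying, for every time step $h\in[H]$ and arm $i\in[N]$, a state $s_h^{i}$ and a binary action $a_h^{i}\in\{0,1\}$. For each $h\in[H]$ let $f_{\text{source}}(h)\subseteq[N]$ and $f_{\text{target}}(h)\subseteq[N]$ be given sets of arms (they may be determined by static features of the arms and by the states and actions recorded in $\tau$). Consider the following randomized procedure (the "Convert Aggregate Behavior to Trajectory" algorithm). For $h=1,2,\dots,H$: set $C_{A,h}=\{c\in f_{\text{source}}(h): a_h^{c}=1\}$ and $C_{B,h}=\{c\in f_{\text{target}}(h): a_h^{c}=0\}$; then, iterating over the elements $c_B\in C_{B,h}$ in a fixed order, if $C_{A,h}\neq\varnothing$, choose $c_A$ uniformly at random from the current $C_{A,h}$, set $a_h^{c_B}=1$ and $a_h^{c_A}=0$, and remove $c_A$ from $C_{A,h}$. All random choices are made independently. The procedure returns the modified trajectory. Then this procedure allocates actions with maximum entropy: any two trajectories that the procedure outputs with positive probability are output with equal probability, i.e. the output is uniformly distributed over its support (equivalently, the output distribution has maximum Shannon entropy among all distributions on that support).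
   Context: An RMAB has $N$ arms; at each time step each arm is in a state and receives action $1$ (intervene/pull) or $0$ (no intervention). A trajectory records the joint states and joint actions of all arms over time steps $1,\dots,H$. The procedure only changes actions, never states. *)

theory Defs
  imports "HOL-Probability.Probability_Mass_Function"
begin

text \<open>A trajectory: states s h i and actions a h i (time step h, arm i).\<close>
type_synonym 's traj = "(nat \<Rightarrow> nat \<Rightarrow> 's) \<times> (nat \<Rightarrow> nat \<Rightarrow> nat)"

fun reassign :: "nat list \<Rightarrow> nat set \<Rightarrow> (nat \<Rightarrow> nat) \<Rightarrow> (nat \<Rightarrow> nat) pmf" where
  "reassign [] CA act = return_pmf act"
| "reassign (cb # cbs) CA act =
     (if CA = {} then reassign cbs CA act
      else bind_pmf (pmf_of_set CA)
             (\<lambda>ca. reassign cbs (CA - {ca}) ((act(cb := 1))(ca := 0))))"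

definition cabt_step :: "(nat \<Rightarrow> nat set) \<Rightarrow> (nat \<Rightarrow> nat set) \<Rightarrow> nat \<Rightarrow> 's traj \<Rightarrow> 's traj pmf" where
  "cabt_step fsrc ftgt h \<tau> =
     (let s = fst \<tau>; a = snd \<tau>;
          CA = {c \<in> fsrc h. a h c = 1};
          CB = {c \<in> ftgt h. a h c = 0}
      in map_pmf (\<lambda>act. (s, a(h := act))) (reassign (sorted_list_of_set CB) CA (a h)))"

definition cabt :: "(nat \<Rightarrow> nat set) \<Rightarrow> (nat \<Rightarrow> nat set) \<Rightarrow> nat \<Rightarrow> 's traj \<Rightarrow> 's traj pmf" where
  "cabt fsrc ftgt H \<tau> = foldl (\<lambda>M h. bind_pmf M (cabt_step fsrc ftgt h)) (return_pmf \<tau>) [1..<H+1]"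

end

theory Submission
  imports Defs
begin

definition DL :: "nat set \<Rightarrow> nat \<Rightarrow> nat list set" where
  "DL A k = {xs. length xs = k \<and> distinct xs \<and> set xs \<subseteq> A}"

fun G :: "nat list \<Rightarrow> (nat \<Rightarrow> nat) \<Rightarrow> nat list \<Rightarrow> (nat \<Rightarrow> nat)" where
  "G (cb # cbs) act (x # xs) = G cbs ((act(cb := 1))(x := 0)) xs"
| "G _ act _ = act"

lemma DL_finite: "finite A \<Longrightarrow> finite (DL A k)"
proof -
  assume "finite A"
  then have "finite {xs. set xs \<subseteq> A \<and> length xs = k}" by (rule finite_lists_length_eq)
  then show ?thesis unfolding DL_def by (rule rev_finite_subset) auto
qed

lemma DL_nonempty: "finite A \<Longrightarrow> k \<le> card A \<Longrightarrow> DL A k \<noteq> {}"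
proof -
  assume a: "finite A" "k \<le> card A"
  have "take k (sorted_list_of_set A) \<in> DL A k"
    using a unfolding DL_def by (auto dest: in_set_takeD)
  then show ?thesis by blast
qed

lemma DL_zero: "DL A 0 = {[]}" unfolding DL_def by auto

lemma DL_Suc: "DL A (Suc k) = (\<Union>x\<in>A. Cons x ` DL (A - {x}) k)"
proof (intro equalityI subsetI)
  fix xs assume "xs \<in> DL A (Suc k)"
  then obtain y ys where xs: "xs = y # ys" "length ys = k" "y \<notin> set ys" "distinct ys" "y \<in> A" "set ys \<subseteq> A"
    unfolding DL_def by (auto simp: length_Suc_conv)
  then have "ys \<in> DL (A - {y}) k" unfolding DL_def by auto
  then show "xs \<in> (\<Union>x\<in>A. Cons x ` DL (A - {x}) k)" using xs by blast
next
  fix xs assume "xs \<in> (\<Union>x\<in>A. Cons x ` DL (A - {x}) k)"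
  then show "xs \<in> DL A (Suc k)" unfolding DL_def by auto
qed

lemma card_DL: "finite A \<Longrightarrow> k \<le> card A \<Longrightarrow> card (DL A k) = \<Prod>{card A - k + 1 .. card A}"
  unfolding DL_def by (rule card_lists_distinct_length_eq)

lemma lemB:
  assumes "finite A" "k < card A"
  shows "pmf_of_set (DL A (Suc k)) = bind_pmf (pmf_of_set A) (\<lambda>x. map_pmf (Cons x) (pmf_of_set (DL (A - {x}) k)))"
proof -
  have A: "A \<noteq> {}" using assms by auto
  have c: "\<And>x. x \<in> A \<Longrightarrow> k \<le> card (A - {x})" using assms by auto
  have "bind_pmf (pmf_of_set A) (\<lambda>x. map_pmf (Cons x) (pmf_of_set (DL (A - {x}) k)))
      = bind_pmf (pmf_of_set A) (\<lambda>x. pmf_of_set (Cons x ` DL (A - {x}) k))"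
  proof (rule bind_pmf_cong, simp)
    fix x assume "x \<in> set_pmf (pmf_of_set A)"
    then have x: "x \<in> A" using assms A by simp
    have "finite (A - {x})" using assms by simp
    then show "map_pmf (Cons x) (pmf_of_set (DL (A - {x}) k)) = pmf_of_set (Cons x ` DL (A - {x}) k)"
      using c[OF x] by (intro map_pmf_of_set_inj) (auto simp: DL_nonempty DL_finite)
  qed
  also have "\<dots> = pmf_of_set (\<Union>x\<in>A. Cons x ` DL (A - {x}) k)"
  proof (rule pmf_of_set_UN[symmetric, where n = "\<Prod>{card A - 1 - k + 1 .. card A - 1}"])
    show "finite (\<Union>x\<in>A. Cons x ` DL (A - {x}) k)" using assms by (auto intro: DL_finite)
    show "A \<noteq> {}" by fact
    show "\<And>x. x \<in> A \<Longrightarrow> Cons x ` DL (A - {x}) k \<noteq> {}" using assms c by (metis DL_nonempty finite_Diff image_is_empty)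
    show "\<And>x. x \<in> A \<Longrightarrow> card (Cons x ` DL (A - {x}) k) = \<Prod>{card A - 1 - k + 1 .. card A - 1}"
      using assms c by (simp add: card_image card_DL)
    show "disjoint_family_on (\<lambda>x. Cons x ` DL (A - {x}) k) A"
      unfolding disjoint_family_on_def by auto
  qed
  finally show ?thesis by (simp add: DL_Suc)
qed

lemma lemA:
  "finite CA \<Longrightarrow> reassign cbs CA act = map_pmf (G cbs act) (pmf_of_set (DL CA (min (length cbs) (card CA))))"
proof (induction cbs arbitrary: CA act)
  case Nil
  then show ?case by (simp add: DL_zero pmf_of_set_singleton)
next
  case (Cons cb cbs)
  show ?case
  proof (cases "CA = {}")
    case True
    then show ?thesis using Cons by (simp add: DL_zero pmf_of_set_singleton)
  next
    case False
    define k' where "k' = min (length cbs) (card CA - 1)"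
    have cpos: "card CA > 0" using False Cons.prems by auto
    have k: "min (length (cb # cbs)) (card CA) = Suc k'" unfolding k'_def using cpos by auto
    have kl: "k' < card CA" unfolding k'_def using cpos by auto
    have "map_pmf (G (cb # cbs) act) (pmf_of_set (DL CA (min (length (cb # cbs)) (card CA))))
       = bind_pmf (pmf_of_set CA) (\<lambda>x. map_pmf (G (cb # cbs) act \<circ> Cons x) (pmf_of_set (DL (CA - {x}) k')))"
      unfolding k lemB[OF Cons.prems kl] by (simp add: map_bind_pmf map_pmf_comp o_def)
    also have "\<dots> = bind_pmf (pmf_of_set CA) (\<lambda>x. reassign cbs (CA - {x}) ((act(cb := 1))(x := 0)))"
    proof (rule bind_pmf_cong, simp)
      fix x assume "x \<in> set_pmf (pmf_of_set CA)"
      then have x: "x \<in> CA" using False Cons.prems by simp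
      have "card (CA - {x}) = card CA - 1" using x Cons.prems by simp
      then show "map_pmf (G (cb # cbs) act \<circ> Cons x) (pmf_of_set (DL (CA - {x}) k'))
           = reassign cbs (CA - {x}) ((act(cb := 1))(x := 0))"
        using Cons.IH[of "CA - {x}"] Cons.prems unfolding k'_def by (simp add: o_def)
    qed
    finally show ?thesis using False by simp
  qed
qed

lemma G_formula:
  "set xs \<inter> set cbs = {} \<Longrightarrow> distinct xs \<Longrightarrow> length xs \<le> length cbs \<Longrightarrow>
   G cbs act xs c = (if c \<in> set xs then 0 else if c \<in> set (take (length xs) cbs) then 1 else act c)"
proof (induction xs arbitrary: cbs act)
  case Nil
  then show ?case by (cases cbs) auto
next
  case (Cons x xs)
  then obtain cb cbs' where cbs: "cbs = cb # cbs'" by (cases cbs) auto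
  have "G cbs act (x # xs) c = G cbs' ((act(cb := 1))(x := 0)) xs c" by (simp add: cbs)
  also have "\<dots> = (if c \<in> set xs then 0 else if c \<in> set (take (length xs) cbs') then 1 else ((act(cb := 1))(x := 0)) c)"
    by (rule Cons.IH) (use Cons.prems cbs in auto)
  finally show ?case using Cons.prems cbs by (auto dest: in_set_takeD)
qed

lemma uniform_pmf:
  assumes "finite (set_pmf M)" "\<forall>x\<in>set_pmf M. \<forall>y\<in>set_pmf M. pmf M x = pmf M y"
  shows "M = pmf_of_set (set_pmf M)"
proof -
  have ne: "set_pmf M \<noteq> {}" by (rule set_pmf_not_empty)
  obtain x0 where x0: "x0 \<in> set_pmf M" using ne by blast
  have "1 = (\<Sum>x\<in>set_pmf M. pmf M x)" using sum_pmf_eq_1[OF assms(1) subset_refl] by simp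
  also have "\<dots> = (\<Sum>x\<in>set_pmf M. pmf M x0)" by (intro sum.cong refl) (use assms(2) x0 in blast)
  also have "\<dots> = card (set_pmf M) * pmf M x0" by simp
  finally have "card (set_pmf M) * pmf M x0 = 1" by simp
  moreover have "card (set_pmf M) > 0" using assms(1) ne by (simp add: card_gt_0_iff)
  ultimately have c: "pmf M x0 = 1 / card (set_pmf M)" by (simp add: field_simps)
  show ?thesis
  proof (rule pmf_eqI)
    fix x
    show "pmf M x = pmf (pmf_of_set (set_pmf M)) x"
    proof (cases "x \<in> set_pmf M")
      case True
      then have "pmf M x = pmf M x0" using assms(2) x0 by blast
      then show ?thesis using c True assms(1) ne by (simp add: pmf_of_set)
    next
      case False
      then show ?thesis using assms(1) ne by (simp add: pmf_of_set set_pmf_eq)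
    qed
  qed
qed

lemma lemC:
  assumes "finite CA" "k \<le> card CA" "k \<le> length cbs" "set cbs \<inter> CA = {}" "\<forall>c\<in>CA. act c \<noteq> 0"
  shows "map_pmf (G cbs act) (pmf_of_set (DL CA k)) = pmf_of_set (G cbs act ` DL CA k)"
proof -
  let ?D = "DL CA k"
  have D: "finite ?D" "?D \<noteq> {}" using assms DL_finite DL_nonempty by auto
  let ?M = "map_pmf (G cbs act) (pmf_of_set ?D)"
  have S: "set_pmf ?M = G cbs act ` ?D" using D by simp
  have fib: "?D \<inter> G cbs act -` {G cbs act x} = DL (set x) k" if x: "x \<in> ?D" for x
  proof -
    have eq: "G cbs act y = G cbs act x \<longleftrightarrow> set y = set x" if y: "y \<in> ?D" for y
    proof
      assume e: "G cbs act y = G cbs act x"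
      have fx: "\<And>c. G cbs act x c = (if c \<in> set x then 0 else if c \<in> set (take k cbs) then 1 else act c)"
        using x assms by (intro trans[OF G_formula]) (auto simp: DL_def)
      have fy: "\<And>c. G cbs act y c = (if c \<in> set y then 0 else if c \<in> set (take k cbs) then 1 else act c)"
        using y assms by (intro trans[OF G_formula]) (auto simp: DL_def)
      show "set y = set x"
      proof (rule ccontr)
        assume "set y \<noteq> set x"
        then obtain c where "c \<in> set y \<and> c \<notin> set x \<or> c \<in> set x \<and> c \<notin> set y" by blast
        moreover have "c \<in> set x \<or> c \<in> set y \<Longrightarrow> c \<in> CA \<and> c \<notin> set (take k cbs)"
          using x y assms(4) by (auto simp: DL_def dest: in_set_takeD)
        ultimately show False using fun_cong[OF e, of c] fx[of c] fy[of c] assms(5) by (auto split: if_splits)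
      qed
    next
      assume "set y = set x"
      then show "G cbs act y = G cbs act x"
        using x y assms by (intro ext, subst G_formula, (auto simp: DL_def)[3], subst G_formula, (auto simp: DL_def))
    qed
    show ?thesis
    proof (intro equalityI subsetI)
      fix y assume "y \<in> ?D \<inter> G cbs act -` {G cbs act x}"
      then show "y \<in> DL (set x) k" using eq by (auto simp: DL_def)
    next
      fix y assume y: "y \<in> DL (set x) k"
      then have "set y = set x" using x by (auto simp: DL_def distinct_card card_subset_eq)
      moreover have "y \<in> ?D" using y x by (auto simp: DL_def)
      ultimately show "y \<in> ?D \<inter> G cbs act -` {G cbs act x}" using eq by auto
    qed
  qed
  have "\<forall>u\<in>set_pmf ?M. pmf ?M u = \<Prod>{1 .. k} / card ?D"
  proof
    fix u assume "u \<in> set_pmf ?M"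
    then obtain x where x: "x \<in> ?D" "u = G cbs act x" using S by auto
    have ck: "card (set x) = k" using x by (auto simp: DL_def distinct_card)
    have "pmf ?M u = card (DL (set x) k) / card ?D"
      using x by (simp add: pmf_map measure_pmf_of_set[OF D(2) D(1)] fib[OF x(1), symmetric])
    also have "\<dots> = \<Prod>{1 .. k} / card ?D" using ck by (simp add: card_DL)
    finally show "pmf ?M u = \<Prod>{1 .. k} / card ?D" .
  qed
  then have "?M = pmf_of_set (set_pmf ?M)"
    by (intro uniform_pmf) (auto simp: S D)
  also have "pmf_of_set (set_pmf ?M) = pmf_of_set (G cbs act ` DL CA k)" by (simp only: S)
  finally show ?thesis .
qed


lemma reassign_uniform:
  assumes "finite CA" "set cbs \<inter> CA = {}" "\<forall>c\<in>CA. act c \<noteq> 0"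
  shows "\<exists>T. finite T \<and> T \<noteq> {} \<and> reassign cbs CA act = pmf_of_set T"
proof -
  define k where "k = min (length cbs) (card CA)"
  have "reassign cbs CA act = pmf_of_set (G cbs act ` DL CA k)"
    unfolding k_def lemA[OF assms(1)] by (rule lemC) (use assms in auto)
  moreover have "finite (G cbs act ` DL CA k)" using assms(1) by (simp add: DL_finite)
  moreover have "G cbs act ` DL CA k \<noteq> {}" using assms(1) DL_nonempty[of CA k] unfolding k_def by auto
  ultimately show ?thesis by blast
qed

lemma main_ind:
  fixes \<tau> :: "'s traj"
  assumes fin: "\<forall>h\<in>{1..H}. finite (fsrc h) \<and> finite (ftgt h)"
  shows "j \<le> H \<Longrightarrow> \<exists>S. finite S \<and> S \<noteq> {} \<and>
    foldl (\<lambda>M h. bind_pmf M (cabt_step fsrc ftgt h)) (return_pmf \<tau>) [1..<j+1] = pmf_of_set S \<and>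
    (\<forall>x\<in>S. fst x = fst \<tau> \<and> (\<forall>h. h \<notin> {1..j} \<longrightarrow> snd x h = snd \<tau> h))"
proof (induction j)
  case 0
  show ?case by (intro exI[of _ "{\<tau>}"]) (auto simp: pmf_of_set_singleton)
next
  case (Suc j)
  then obtain S where S: "finite S" "S \<noteq> {}"
    "foldl (\<lambda>M h. bind_pmf M (cabt_step fsrc ftgt h)) (return_pmf \<tau>) [1..<j+1] = pmf_of_set S"
    "\<forall>x\<in>S. fst x = fst \<tau> \<and> (\<forall>h. h \<notin> {1..j} \<longrightarrow> snd x h = snd \<tau> h)" by auto
  define h where "h = Suc j"
  have hH: "h \<in> {1..H}" using Suc.prems unfolding h_def by auto
  define CA where "CA = {c \<in> fsrc h. snd \<tau> h c = 1}"
  define CB where "CB = {c \<in> ftgt h. snd \<tau> h c = 0}"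
  define R where "R = reassign (sorted_list_of_set CB) CA (snd \<tau> h)"
  have fCA: "finite CA" using fin hH unfolding CA_def by auto
  have fCB: "finite CB" using fin hH unfolding CB_def by auto
  have d1: "set (sorted_list_of_set CB) \<inter> CA = {}" using fCB unfolding CA_def CB_def by auto
  have d2: "\<forall>c\<in>CA. snd \<tau> h c \<noteq> 0" unfolding CA_def by auto
  obtain T where T: "finite T" "T \<noteq> {}" "R = pmf_of_set T"
    using reassign_uniform[OF fCA d1 d2] unfolding R_def by blast
  define emb where "emb = (\<lambda>(x :: 's traj) act. (fst x, (snd x)(h := act)))"
  have inj: "inj_on (emb x) T" for x
    unfolding emb_def inj_on_def by (auto dest: fun_cong[of _ _ h])
  have step: "cabt_step fsrc ftgt h x = pmf_of_set (emb x ` T)" if x: "x \<in> S" for x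
  proof -
    have "snd x h = snd \<tau> h" using S(4) x unfolding h_def by auto
    then have "cabt_step fsrc ftgt h x = map_pmf (emb x) R"
      unfolding cabt_step_def Let_def R_def CA_def CB_def emb_def by simp
    also have "\<dots> = pmf_of_set (emb x ` T)" unfolding T(3) using inj T(2,1) by (rule map_pmf_of_set_inj)
    finally show ?thesis .
  qed
  have disj: "disjoint_family_on (\<lambda>x. emb x ` T) S"
    unfolding disjoint_family_on_def
  proof (intro ballI impI)
    fix x y assume xy: "x \<in> S" "y \<in> S" "x \<noteq> y"
    show "emb x ` T \<inter> emb y ` T = {}"
    proof (rule ccontr)
      assume "emb x ` T \<inter> emb y ` T \<noteq> {}"
      then obtain a b where e: "emb x a = emb y b" by (metis (no_types, lifting) disjoint_iff imageE)
      have f: "fst x = fst y" using e unfolding emb_def by auto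
      have "snd x h' = snd y h'" for h'
      proof (cases "h' = h")
        case True
        then show ?thesis using S(4) xy unfolding h_def by auto
      next
        case False
        then show ?thesis using fun_cong[OF arg_cong[OF e, of snd], of h'] unfolding emb_def by auto
      qed
      then have "x = y" using f by (simp add: prod_eq_iff ext)
      then show False using xy by simp
    qed
  qed
  have "foldl (\<lambda>M h. bind_pmf M (cabt_step fsrc ftgt h)) (return_pmf \<tau>) [1..<Suc j+1]
      = bind_pmf (pmf_of_set S) (cabt_step fsrc ftgt h)"
    using S(3) unfolding h_def by simp
  also have "\<dots> = bind_pmf (pmf_of_set S) (\<lambda>x. pmf_of_set (emb x ` T))"
    by (rule bind_pmf_cong) (use S(1,2) step in auto)
  also have "\<dots> = pmf_of_set (\<Union>x\<in>S. emb x ` T)"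
    by (rule pmf_of_set_UN[symmetric, where n = "card T"])
       (use S(1,2) T(1,2) disj inj in \<open>auto simp: card_image\<close>)
  finally have eq: "foldl (\<lambda>M h. bind_pmf M (cabt_step fsrc ftgt h)) (return_pmf \<tau>) [1..<Suc j+1]
      = pmf_of_set (\<Union>x\<in>S. emb x ` T)" .
  have inv: "\<forall>z\<in>(\<Union>x\<in>S. emb x ` T). fst z = fst \<tau> \<and> (\<forall>h'. h' \<notin> {1..Suc j} \<longrightarrow> snd z h' = snd \<tau> h')"
    using S(4) unfolding emb_def h_def by auto
  show ?case
    by (rule exI[of _ "\<Union>x\<in>S. emb x ` T"]) (use eq inv S(1,2) T(1,2) in auto)
qed

theorem theorem1:
  fixes N H :: nat and \<tau> :: "'s traj"
    and fsrc ftgt :: "nat \<Rightarrow> nat set"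
  assumes "H \<ge> 1"
    and "\<forall>h\<in>{1..H}. \<forall>i\<in>{1..N}. snd \<tau> h i \<in> {0, 1}"
    and "\<forall>h\<in>{1..H}. fsrc h \<subseteq> {1..N} \<and> ftgt h \<subseteq> {1..N}"
  shows "\<forall>\<tau>1 \<in> set_pmf (cabt fsrc ftgt H \<tau>). \<forall>\<tau>2 \<in> set_pmf (cabt fsrc ftgt H \<tau>).
           pmf (cabt fsrc ftgt H \<tau>) \<tau>1 = pmf (cabt fsrc ftgt H \<tau>) \<tau>2"
proof -
  have fin: "\<forall>h\<in>{1..H}. finite (fsrc h) \<and> finite (ftgt h)"
    using assms(3) by (auto intro: finite_subset)
  obtain S where S: "finite S" "S \<noteq> {}" "cabt fsrc ftgt H \<tau> = pmf_of_set S"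
    using main_ind[OF fin, of H \<tau>] unfolding cabt_def by auto
  show ?thesis using S by (simp add: pmf_of_set)
qed

end
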